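(* Let $T$ and $Q$ be selfadjoint bounded operators on a Hilbert space $V$, with $Q$ nonnegative, and let $A:=Q(I+iT)^{-1}$. Then the Cayley transform $C=(I-A)(I+A)^{-1}=(I-Q+iT)(I+Q+iT)^{-1}$ of $A$ is a Ritt operator.
   Context: A bounded operator $C$ is a Ritt operator if $\sigma(C)\subseteq\mathbb{D}\cup\{1\}$, where $\mathbb{D}$ is the open unit disc, and $\sup_{|z|>1}\|(z-1)(z-C)^{-1}\|<\infty$. *)

theory Defs
  imports "HOL-Analysis.Analysis"
begin

text \<open>Complex Hilbert spaces: a real Banach space with a complex scalar
multiplication extending the real one and a complex inner product
(linear in the second argument) inducing the norm.\<close>

class chilbert = banach +
  fixes scaleC :: "complex \<Rightarrow> 'a \<Rightarrow> 'a"  (infixr \<open>*\<^sub>C\<close> 75)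
    and cinner :: "'a \<Rightarrow> 'a \<Rightarrow> complex"
  assumes scaleC_add_right: "a *\<^sub>C (x + y) = a *\<^sub>C x + a *\<^sub>C y"
    and scaleC_add_left: "(a + b) *\<^sub>C x = a *\<^sub>C x + b *\<^sub>C x"
    and scaleC_scaleC: "a *\<^sub>C (b *\<^sub>C x) = (a * b) *\<^sub>C x"
    and scaleC_of_real: "(complex_of_real r) *\<^sub>C x = r *\<^sub>R x"
    and cinner_commute: "cinner x y = cnj (cinner y x)"
    and cinner_add_right: "cinner x (y + z) = cinner x y + cinner x z"
    and cinner_scaleC_right: "cinner x (a *\<^sub>C y) = a * cinner x y"
    and norm_eq_sqrt_cinner: "norm x = sqrt (Re (cinner x x))"

definition cbounded_linear :: "('a::chilbert \<Rightarrow> 'a) \<Rightarrow> bool" where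
  "cbounded_linear T \<longleftrightarrow>
     (\<forall>x y. T (x + y) = T x + T y) \<and> (\<forall>c x. T (c *\<^sub>C x) = c *\<^sub>C T x) \<and>
     (\<exists>K. \<forall>x. norm (T x) \<le> norm x * K)"

definition selfadjoint :: "('a::chilbert \<Rightarrow> 'a) \<Rightarrow> bool" where
  "selfadjoint T \<longleftrightarrow> (\<forall>x y. cinner (T x) y = cinner x (T y))"

definition nonneg_op :: "('a::chilbert \<Rightarrow> 'a) \<Rightarrow> bool" where
  "nonneg_op T \<longleftrightarrow> (\<forall>x. 0 \<le> Re (cinner (T x) x))"

definition op_invertible :: "('a::chilbert \<Rightarrow> 'a) \<Rightarrow> bool" where
  "op_invertible T \<longleftrightarrow> (\<exists>S. cbounded_linear S \<and> S \<circ> T = id \<and> T \<circ> S = id)"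

definition op_inv :: "('a::chilbert \<Rightarrow> 'a) \<Rightarrow> ('a \<Rightarrow> 'a)" where
  "op_inv T = (THE S. cbounded_linear S \<and> S \<circ> T = id \<and> T \<circ> S = id)"

definition op_spectrum :: "('a::chilbert \<Rightarrow> 'a) \<Rightarrow> complex set" where
  "op_spectrum T = {z. \<not> op_invertible (\<lambda>x. z *\<^sub>C x - T x)}"

definition ritt :: "('a::chilbert \<Rightarrow> 'a) \<Rightarrow> bool" where
  "ritt C \<longleftrightarrow> cbounded_linear C \<and>
     op_spectrum C \<subseteq> ball 0 1 \<union> {1} \<and>
     (\<exists>M. \<forall>z. 1 < cmod z \<longrightarrow>
        onorm (\<lambda>x. (z - 1) *\<^sub>C op_inv (\<lambda>v. z *\<^sub>C v - C v) x) \<le> M)"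

end

theory Submission
  imports Defs
begin

lemma cinner_add_left: "cinner (x + y) (z::'a::chilbert) = cinner x z + cinner y z"
  by (metis cinner_add_right cinner_commute complex_cnj_add)

lemma cinner_scaleC_left: "cinner (a *\<^sub>C x) (y::'a::chilbert) = cnj a * cinner x y"
  by (metis cinner_scaleC_right cinner_commute complex_cnj_mult)

lemma cinner_zero_right[simp]: "cinner x (0::'a::chilbert) = 0"
  using cinner_add_right[of x 0 0] by simp

lemma cinner_zero_left[simp]: "cinner (0::'a::chilbert) x = 0"
  using cinner_add_left[of 0 0 x] by simp

lemma cinner_minus_right: "cinner x (- y::'a::chilbert) = - cinner x y"
  using cinner_add_right[of x y "-y"] by (simp add: add_eq_0_iff)

lemma cinner_minus_left: "cinner (- x::'a::chilbert) y = - cinner x y"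
  using cinner_add_left[of x "-x" y] by (simp add: add_eq_0_iff)

lemma cinner_diff_right: "cinner x (y - z::'a::chilbert) = cinner x y - cinner x z"
  using cinner_add_right[of x y "-z"] cinner_minus_right[of x z] by simp

lemma cinner_diff_left: "cinner (x - y::'a::chilbert) z = cinner x z - cinner y z"
  using cinner_add_left[of x "-y" z] cinner_minus_left[of y z] by simp

lemma scaleC_zero_right[simp]: "a *\<^sub>C (0::'a::chilbert) = 0"
  using scaleC_add_right[of a 0 0] by simp

lemma scaleC_zero_left[simp]: "0 *\<^sub>C (x::'a::chilbert) = 0"
  using scaleC_of_real[of 0 x] by simp

lemma scaleC_one[simp]: "1 *\<^sub>C (x::'a::chilbert) = x"
  using scaleC_of_real[of 1 x] by simp

lemma scaleC_minus_right: "a *\<^sub>C (- x::'a::chilbert) = - (a *\<^sub>C x)"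
  using scaleC_add_right[of a x "-x"] by (simp add: add_eq_0_iff)

lemma scaleC_diff_right: "a *\<^sub>C (x - y::'a::chilbert) = a *\<^sub>C x - a *\<^sub>C y"
  using scaleC_add_right[of a x "-y"] scaleC_minus_right[of a y] by simp

lemma scaleC_minus_left: "(- a) *\<^sub>C (x::'a::chilbert) = - (a *\<^sub>C x)"
  using scaleC_add_left[of a "-a" x] by (simp add: add_eq_0_iff)

lemma scaleC_diff_left: "(a - b) *\<^sub>C (x::'a::chilbert) = a *\<^sub>C x - b *\<^sub>C x"
  using scaleC_add_left[of a "-b" x] scaleC_minus_left[of b x] by simp

lemma scaleR_as_scaleC: "r *\<^sub>R (x::'a::chilbert) = complex_of_real r *\<^sub>C x"
  by (simp add: scaleC_of_real)

lemma cinner_scaleR_left: "cinner (r *\<^sub>R x) (y::'a::chilbert) = complex_of_real r * cinner x y"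
  by (simp add: scaleR_as_scaleC cinner_scaleC_left)

lemma cinner_self_Im: "Im (cinner x (x::'a::chilbert)) = 0"
  using arg_cong[OF cinner_commute[of x x], of Im] by simp

lemma cinner_self_Re_nonneg: "0 \<le> Re (cinner x (x::'a::chilbert))"
proof (rule ccontr)
  assume "\<not> ?thesis"
  then have "sqrt (Re (cinner x x)) < 0" by simp
  then show False using norm_eq_sqrt_cinner[of x] by (metis norm_ge_zero not_le)
qed

lemma norm_sq_cinner: "(norm x)^2 = Re (cinner x (x::'a::chilbert))"
  using norm_eq_sqrt_cinner[of x] cinner_self_Re_nonneg[of x] by simp

lemma cinner_self_eq: "cinner x (x::'a::chilbert) = complex_of_real ((norm x)^2)"
  by (simp add: complex_eq_iff norm_sq_cinner cinner_self_Im)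

lemma norm_scaleC: "norm (a *\<^sub>C (x::'a::chilbert)) = cmod a * norm x"
proof -
  have e: "cinner (a *\<^sub>C x) (a *\<^sub>C x) = cnj a * (a * complex_of_real ((norm x)^2))"
    using cinner_self_eq[of x] by (simp add: cinner_scaleC_left cinner_scaleC_right mult_ac)
  have "(norm (a *\<^sub>C x))^2 = Re (cnj a * (a * complex_of_real ((norm x)^2)))"
    using norm_sq_cinner[of "a *\<^sub>C x"] e by simp
  also have "\<dots> = (cmod a)^2 * (norm x)^2"
    unfolding cmod_power2 by (simp add: power2_eq_square algebra_simps)
  finally have "(norm (a *\<^sub>C x))^2 = (cmod a * norm x)^2" by (simp add: power_mult_distrib)
  then show ?thesis by (simp add: power2_eq_iff_nonneg)
qed

lemma norm_add_sq: "(norm (x + y))^2 = (norm x)^2 + 2 * Re (cinner y x) + (norm (y::'a::chilbert))^2"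
proof -
  have "cinner (x+y) (x+y) = cinner x x + (cinner x y + cinner y x) + cinner y y"
    by (simp add: cinner_add_left cinner_add_right)
  moreover have "Re (cinner x y) = Re (cinner y x)"
    using cinner_commute[of x y] by simp
  ultimately show ?thesis by (simp add: norm_sq_cinner)
qed

lemma cbl_add: "cbounded_linear T \<Longrightarrow> T (x + y) = T x + T y"
  by (simp add: cbounded_linear_def)

lemma cbl_scaleC: "cbounded_linear T \<Longrightarrow> T (c *\<^sub>C x) = c *\<^sub>C T x"
  by (simp add: cbounded_linear_def)

lemma cbl_zero: "cbounded_linear T \<Longrightarrow> T 0 = 0"
  using cbl_add[of T 0 0] by simp

lemma cbl_minus: "cbounded_linear T \<Longrightarrow> T (- x) = - T x"
  using cbl_add[of T x "-x"] cbl_zero[of T] by (simp add: add_eq_0_iff)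

lemma cbl_diff: "cbounded_linear T \<Longrightarrow> T (x - y) = T x - T y"
  using cbl_add[of T x "-y"] cbl_minus[of T y] by simp

lemma cbl_scaleR: "cbounded_linear T \<Longrightarrow> T (r *\<^sub>R x) = r *\<^sub>R T x"
  by (simp add: scaleR_as_scaleC cbl_scaleC)

lemma cbl_bound: "cbounded_linear T \<Longrightarrow> \<exists>K\<ge>0. \<forall>x. norm (T x) \<le> norm x * K"
proof -
  assume "cbounded_linear T"
  then obtain K where K: "\<forall>x. norm (T x) \<le> norm x * K" by (auto simp: cbounded_linear_def)
  have "\<forall>x. norm (T x) \<le> norm x * max K 0"
    using K by (metis max.cobounded1 mult_left_mono norm_ge_zero order_trans)
  then show ?thesis by (intro exI[of _ "max K 0"]) simp
qed

lemma cbl_comp: "cbounded_linear S \<Longrightarrow> cbounded_linear T \<Longrightarrow> cbounded_linear (S \<circ> T)"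
proof -
  assume S: "cbounded_linear S" and T: "cbounded_linear T"
  obtain K1 where K1: "K1 \<ge> 0" "\<forall>x. norm (S x) \<le> norm x * K1" using cbl_bound[OF S] by blast
  obtain K2 where K2: "K2 \<ge> 0" "\<forall>x. norm (T x) \<le> norm x * K2" using cbl_bound[OF T] by blast
  have "\<forall>x. norm (S (T x)) \<le> norm x * (K2 * K1)"
  proof
    fix x
    have "norm (S (T x)) \<le> norm (T x) * K1" using K1 by blast
    also have "\<dots> \<le> norm x * K2 * K1" using mult_right_mono[OF K2(2)[rule_format, of x] K1(1)] .
    finally show "norm (S (T x)) \<le> norm x * (K2 * K1)" by (simp add: mult.assoc)
  qed
  then show ?thesis unfolding cbounded_linear_def
    by (intro conjI allI exI[of _ "K2 * K1"]) (simp_all add: cbl_add[OF S] cbl_add[OF T] cbl_scaleC[OF S] cbl_scaleC[OF T])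
qed

lemma op_inv_unique:
  assumes "cbounded_linear S" "S \<circ> T = id" "T \<circ> S = id"
  shows "op_inv T = S"
  unfolding op_inv_def
proof (rule the_equality)
  show "cbounded_linear S \<and> S \<circ> T = id \<and> T \<circ> S = id" using assms by blast
  fix S' assume "cbounded_linear S' \<and> S' \<circ> T = id \<and> T \<circ> S' = id"
  then have "S' = S' \<circ> (T \<circ> S)" "S' \<circ> T = id" using assms by auto
  then show "S' = S" by (simp add: comp_assoc[symmetric])
qed

lemma op_inv_props:
  assumes "op_invertible T"
  shows "cbounded_linear (op_inv T)" "\<And>x. op_inv T (T x) = x" "\<And>x. T (op_inv T x) = x"
proof -
  obtain S where S: "cbounded_linear S" "S \<circ> T = id" "T \<circ> S = id"
    using assms by (auto simp: op_invertible_def)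
  have e: "op_inv T = S" using op_inv_unique[OF S] .
  show "cbounded_linear (op_inv T)" "\<And>x. op_inv T (T x) = x" "\<And>x. T (op_inv T x) = x"
    unfolding e using S by (auto simp: fun_eq_iff)
qed

lemma op_invertibleI:
  assumes "cbounded_linear S" "\<And>x. S (T x) = x" "\<And>x. T (S x) = x"
  shows "op_invertible T" "op_inv T = S"
proof -
  have "S \<circ> T = id" "T \<circ> S = id" using assms by (auto simp: fun_eq_iff)
  then show "op_invertible T" "op_inv T = S"
    using assms(1) op_inv_unique by (auto simp: op_invertible_def)
qed

lemma accretive_norm_ge:
  assumes "\<And>x. (norm x)^2 \<le> Re (cinner (E x) (x::'a::chilbert))"
  shows "norm x \<le> norm (E x)"
proof -
  have "(norm (E x))^2 = (norm (x + (E x - x)))^2" by simp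
  also have "\<dots> = (norm x)^2 + 2 * Re (cinner (E x - x) x) + (norm (E x - x))^2"
    by (rule norm_add_sq)
  also have "Re (cinner (E x - x) x) = Re (cinner (E x) x) - (norm x)^2"
    by (simp add: cinner_diff_left norm_sq_cinner)
  finally have h: "(norm (E x))^2 = (norm x)^2 + 2 * (Re (cinner (E x) x) - (norm x)^2) + (norm (E x - x))^2" .
  have "(norm x)^2 \<le> (norm (E x))^2"
    using h assms[of x] zero_le_power2[of "norm (E x - x)"] by (smt (verit))
  then show ?thesis using norm_ge_zero power2_le_imp_le by blast
qed

lemma coercive_inv:
  assumes E: "cbounded_linear E"
    and co: "\<And>x. (norm x)^2 \<le> Re (cinner (E x) (x::'a::chilbert))"
  shows "op_invertible E" "\<And>y. norm (op_inv E y) \<le> norm y"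
proof -
  have ge: "\<And>x. norm x \<le> norm (E x)" using accretive_norm_ge co by blast
  have inj: "x = y" if "E x = E y" for x y
  proof -
    have "norm (x - y) \<le> norm (E (x - y))" by (rule ge)
    also have "E (x - y) = 0" using that cbl_diff[OF E] by simp
    finally show ?thesis by simp
  qed
  obtain K where K: "K \<ge> 0" "\<And>x. norm (E x) \<le> norm x * K" using cbl_bound[OF E] by blast
  define M where "M = K + 1"
  define t where "t = 1 / M^2"
  have M1: "M \<ge> 1" using K by (simp add: M_def)
  have t: "0 < t" "t \<le> 1" using M1 by (auto simp: t_def)
  have tM: "t^2 * M^2 = t" using M1 by (simp add: t_def power2_eq_square)
  have contr: "norm (w - t *\<^sub>R E w) \<le> sqrt (1 - t) * norm w" for w
  proof -
    have "(norm (w - t *\<^sub>R E w))^2 = (norm (w + (- (t *\<^sub>R E w))))^2" by simp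
    also have "\<dots> = (norm w)^2 + 2 * Re (cinner (- (t *\<^sub>R E w)) w) + (norm (t *\<^sub>R E w))^2"
      by (simp only: norm_add_sq norm_minus_cancel)
    also have "\<dots> = (norm w)^2 - 2 * t * Re (cinner (E w) w) + t^2 * (norm (E w))^2"
      by (simp add: cinner_minus_left cinner_scaleR_left power_mult_distrib abs_of_pos[OF t(1)])
    also have "\<dots> \<le> (norm w)^2 - 2 * t * (norm w)^2 + t^2 * (M^2 * (norm w)^2)"
    proof -
      have a: "2 * t * (norm w)^2 \<le> 2 * t * Re (cinner (E w) w)" using co[of w] t by simp
      have "norm (E w) \<le> norm w * M" using K(2)[of w] by (simp add: M_def) (smt (verit) mult_left_mono norm_ge_zero)
      then have "(norm (E w))^2 \<le> (norm w * M)^2" using norm_ge_zero power_mono by blast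
      then have b: "t^2 * (norm (E w))^2 \<le> t^2 * (M^2 * (norm w)^2)"
        by (simp add: mult_left_mono power_mult_distrib mult.commute)
      show ?thesis using a b by linarith
    qed
    also have "\<dots> = (1 - t) * (norm w)^2" using tM by (simp add: algebra_simps)
    also have "\<dots> = (sqrt (1 - t) * norm w)^2" using t by (simp add: power_mult_distrib)
    finally show ?thesis
      using t by (meson mult_nonneg_nonneg norm_ge_zero power2_le_imp_le real_sqrt_ge_zero diff_ge_0_iff_ge)
  qed
  have surj: "\<exists>x. E x = y" for y
  proof -
    define f where "f u = u - t *\<^sub>R (E u - y)" for u
    have "\<forall>u v. dist (f u) (f v) \<le> sqrt (1 - t) * dist u v"
    proof (intro allI)
      fix u v
      have "f u - f v = (u - v) - t *\<^sub>R E (u - v)"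
        by (simp add: f_def cbl_diff[OF E] algebra_simps)
      then show "dist (f u) (f v) \<le> sqrt (1 - t) * dist u v"
        using contr[of "u - v"] by (simp add: dist_norm)
    qed
    moreover have "sqrt (1 - t) < 1" "0 \<le> sqrt (1 - t)" using t by auto
    ultimately obtain x where "f x = x" using banach_fix_type[of "sqrt (1 - t)" f] by auto
    then have "t *\<^sub>R (E x - y) = 0" by (simp add: f_def)
    then show ?thesis using t by auto
  qed
  define S where "S y = (THE x. E x = y)" for y
  have ES: "E (S y) = y" for y
    unfolding S_def using surj[of y] inj by (metis (mono_tags, lifting) theI)
  have SE: "S (E x) = x" for x using ES inj by blast
  have "cbounded_linear S"
    unfolding cbounded_linear_def
  proof (intro conjI allI exI)
    fix x y show "S (x + y) = S x + S y"
      by (rule inj) (simp add: ES cbl_add[OF E])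
  next
    fix c x show "S (c *\<^sub>C x) = c *\<^sub>C S x"
      by (rule inj) (simp add: ES cbl_scaleC[OF E])
  next
    fix x show "norm (S x) \<le> norm x * 1" using ge[of "S x"] by (simp add: ES)
  qed
  then have "op_invertible E" "op_inv E = S" using op_invertibleI[of S E] SE ES by auto
  then show "op_invertible E" "\<And>y. norm (op_inv E y) \<le> norm y"
    using ge ES by auto (metis ES ge)
qed

lemma cbl_scale: "cbounded_linear (\<lambda>x::'a::chilbert. c *\<^sub>C x)"
  unfolding cbounded_linear_def
  by (auto simp: scaleC_add_right scaleC_scaleC mult.commute norm_scaleC intro!: exI[of _ "cmod c"])

lemma cbl_E:
  assumes T: "cbounded_linear T" and Q: "cbounded_linear (Q::'a::chilbert \<Rightarrow> 'a)"
  shows "cbounded_linear (\<lambda>x. x + a *\<^sub>C Q x + b *\<^sub>C T x)"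
proof -
  obtain K1 where K1: "K1 \<ge> 0" "\<forall>x. norm (Q x) \<le> norm x * K1" using cbl_bound[OF Q] by blast
  obtain K2 where K2: "K2 \<ge> 0" "\<forall>x. norm (T x) \<le> norm x * K2" using cbl_bound[OF T] by blast
  have b1: "norm (x + a *\<^sub>C Q x + b *\<^sub>C T x) \<le> norm x * (1 + cmod a * K1 + cmod b * K2)" for x
  proof -
    have t1: "norm (x + a *\<^sub>C Q x + b *\<^sub>C T x) \<le> norm (x + a *\<^sub>C Q x) + norm (b *\<^sub>C T x)"
      by (rule norm_triangle_ineq)
    have t2: "norm (x + a *\<^sub>C Q x) \<le> norm x + norm (a *\<^sub>C Q x)"
      by (rule norm_triangle_ineq)
    have t3: "cmod a * norm (Q x) \<le> cmod a * (norm x * K1)"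
      using K1(2) by (simp add: mult_left_mono)
    have t4: "cmod b * norm (T x) \<le> cmod b * (norm x * K2)"
      using K2(2) by (simp add: mult_left_mono)
    have "norm (x + a *\<^sub>C Q x + b *\<^sub>C T x) \<le> norm x + cmod a * (norm x * K1) + cmod b * (norm x * K2)"
      using t1 t2 t3 t4 unfolding norm_scaleC by linarith
    then show ?thesis by (simp add: algebra_simps)
  qed
  have b2: "(x + y) + a *\<^sub>C Q (x + y) + b *\<^sub>C T (x + y) =
      (x + a *\<^sub>C Q x + b *\<^sub>C T x) + (y + a *\<^sub>C Q y + b *\<^sub>C T y)" for x y
    by (simp add: cbl_add[OF Q] cbl_add[OF T] scaleC_add_right algebra_simps)
  have b3: "c *\<^sub>C x + a *\<^sub>C Q (c *\<^sub>C x) + b *\<^sub>C T (c *\<^sub>C x) =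
      c *\<^sub>C (x + a *\<^sub>C Q x + b *\<^sub>C T x)" for c x
    by (simp add: cbl_scaleC[OF Q] cbl_scaleC[OF T] scaleC_add_right scaleC_scaleC mult.commute)
  show ?thesis unfolding cbounded_linear_def
    by (intro conjI allI exI[of _ "1 + cmod a * K1 + cmod b * K2"]) (simp_all only: b1 b2 b3)
qed

lemma selfadjoint_real: "selfadjoint T \<Longrightarrow> Im (cinner (T x) (x::'a::chilbert)) = 0"
  proof -
  assume "selfadjoint T"
  then have "cinner (T x) x = cnj (cinner (T x) x)"
    unfolding selfadjoint_def by (metis cinner_commute)
  from arg_cong[OF this, of Im] show ?thesis by simp
qed

lemma E_coercive:
  assumes "selfadjoint T" "selfadjoint Q" "nonneg_op Q" "0 \<le> Re s"
  shows "(norm x)^2 \<le> Re (cinner (x + s *\<^sub>C Q x + \<i> *\<^sub>C T x) (x::'a::chilbert))"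
proof -
  have "Re (cinner (x + s *\<^sub>C Q x + \<i> *\<^sub>C T x) x) =
      (norm x)^2 + Re s * Re (cinner (Q x) x)"
    using selfadjoint_real[OF assms(1), of x] selfadjoint_real[OF assms(2), of x]
    by (simp add: cinner_add_left cinner_scaleC_left norm_sq_cinner)
  moreover have "0 \<le> Re s * Re (cinner (Q x) x)"
    using assms(3,4) by (simp add: nonneg_op_def)
  ultimately show ?thesis by simp
qed

lemma lin_comb:
  "a *\<^sub>C (y + b *\<^sub>C u + c *\<^sub>C v) - (y + b' *\<^sub>C u + c' *\<^sub>C v) =
     (a - 1) *\<^sub>C y + (a * b - b') *\<^sub>C u + (a * c - c') *\<^sub>C (v::'a::chilbert)"
  by (simp add: scaleC_add_right scaleC_scaleC scaleC_diff_left)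

theorem lemma2p4:
  fixes T Q :: "'a::chilbert \<Rightarrow> 'a"
  assumes "cbounded_linear T" and "selfadjoint T"
    and "cbounded_linear Q" and "selfadjoint Q" and "nonneg_op Q"
  defines "A \<equiv> Q \<circ> op_inv (\<lambda>x. x + \<i> *\<^sub>C T x)"
  defines "C \<equiv> (\<lambda>x. x - A x) \<circ> op_inv (\<lambda>x. x + A x)"
  shows "op_invertible (\<lambda>x. x + \<i> *\<^sub>C T x) \<and> op_invertible (\<lambda>x. x + A x)
    \<and> C = (\<lambda>x. x - Q x + \<i> *\<^sub>C T x) \<circ> op_inv (\<lambda>x. x + Q x + \<i> *\<^sub>C T x)
    \<and> ritt C"
proof -
  note Tb = assms(1) and Ts = assms(2) and Qb = assms(3) and Qs = assms(4) and Qn = assms(5)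
  define E where "E s = (\<lambda>x. x + s *\<^sub>C Q x + \<i> *\<^sub>C T x)" for s
  have Ecbl: "cbounded_linear (E s)" for s unfolding E_def by (rule cbl_E[OF Tb Qb])
  have Einv: "op_invertible (E s)" "\<And>y. norm (op_inv (E s) y) \<le> norm y" if "0 \<le> Re s" for s
    using coercive_inv[OF Ecbl, of s] E_coercive[OF Ts Qs Qn that] unfolding E_def by auto
  define D where "D = (\<lambda>x. x + \<i> *\<^sub>C T x)"
  define DQ where "DQ = (\<lambda>x. x + Q x + \<i> *\<^sub>C T x)"
  define Dm where "Dm = (\<lambda>x. x - Q x + \<i> *\<^sub>C T x)"
  have DE: "D = E 0" unfolding D_def E_def by simp
  have DQE: "DQ = E 1" unfolding DQ_def E_def by simp
  have DmE: "Dm = E (-1)" unfolding Dm_def E_def by (simp add: scaleC_minus_left)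
  have Dinv: "op_invertible D" using Einv(1)[of 0] DE by simp
  have DQinv: "op_invertible DQ" using Einv(1)[of 1] DQE by simp
  define G where "G = op_inv D"
  define N where "N = op_inv DQ"
  have Dcbl: "cbounded_linear D" and DQcbl: "cbounded_linear DQ" and Dmcbl: "cbounded_linear Dm"
    using Ecbl DE DQE DmE by auto
  have Gcbl: "cbounded_linear G" and GD: "\<And>x. G (D x) = x" and DG: "\<And>x. D (G x) = x"
    using op_inv_props[OF Dinv] unfolding G_def by auto
  have Ncbl: "cbounded_linear N" and NDQ: "\<And>x. N (DQ x) = x" and DQN: "\<And>x. DQ (N x) = x"
    using op_inv_props[OF DQinv] unfolding N_def by auto
  have Aeq: "A = Q \<circ> G" unfolding A_def G_def D_def by simp
  have DQ_D: "DQ y = D y + Q y" for y unfolding DQ_def D_def by (simp add: algebra_simps)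
  have Dm_D: "Dm y = D y - Q y" for y unfolding Dm_def D_def by (simp add: algebra_simps)
  define Ap where "Ap = (\<lambda>x. x + A x)"
  have SAp: "(D \<circ> N) (Ap x) = x" for x
  proof -
    have "Ap x = DQ (G x)" unfolding Ap_def Aeq using DQ_D[of "G x"] DG[of x] by simp
    then show ?thesis using NDQ DG by simp
  qed
  have ApS: "Ap ((D \<circ> N) x) = x" for x
    unfolding Ap_def Aeq using GD DQ_D[of "N x"] DQN[of x] by simp
  have Apinv: "op_invertible Ap" and Apinv_eq: "op_inv Ap = D \<circ> N"
    using op_invertibleI[OF cbl_comp[OF Dcbl Ncbl] SAp ApS] by auto
  have Ceq: "C = Dm \<circ> N"
  proof -
    have "C = (\<lambda>x. x - A x) \<circ> (D \<circ> N)" unfolding C_def using Apinv_eq by (simp add: Ap_def)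
    also have "\<dots> = Dm \<circ> N"
      by (rule ext) (simp add: Aeq GD Dm_D)
    finally show ?thesis .
  qed
  have Ccbl: "cbounded_linear C" using Ceq cbl_comp[OF Dmcbl Ncbl] by simp
  obtain K where K: "K \<ge> 0" "\<And>x. norm (DQ x) \<le> norm x * K" using cbl_bound[OF DQcbl] by blast
  have resolv: "op_invertible (\<lambda>v. z *\<^sub>C v - C v) \<and>
      onorm (\<lambda>x. (z - 1) *\<^sub>C op_inv (\<lambda>v. z *\<^sub>C v - C v) x) \<le> K"
    if z1: "z \<noteq> 1" and z2: "1 \<le> cmod z" for z
  proof -
    define s where "s = (z + 1) / (z - 1)"
    have sRe: "0 \<le> Re s"
    proof -
      have "Re s = Re ((z + 1) * cnj (z - 1)) / (cmod (z - 1))^2"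
        unfolding s_def by (simp add: Re_divide cmod_power2)
      also have "Re ((z + 1) * cnj (z - 1)) = (cmod z)^2 - 1"
        unfolding cmod_power2 by (simp add: power2_eq_square algebra_simps)
      finally have eq: "Re s = ((cmod z)^2 - 1) / (cmod (z - 1))^2" .
      have "1 \<le> (cmod z)^2" using z2 by (simp add: one_le_power)
      then show ?thesis unfolding eq by simp
    qed
    define H where "H = op_inv (E s)"
    have Hinv: "op_invertible (E s)" using Einv(1)[OF sRe] .
    have Hcbl: "cbounded_linear H" and HE: "\<And>x. H (E s x) = x" and EH: "\<And>x. E s (H x) = x"
      using op_inv_props[OF Hinv] unfolding H_def by auto
    have Hn: "norm (H y) \<le> norm y" for y unfolding H_def using Einv(2)[OF sRe] .
    have zs: "(z - 1) * s = z + 1" using z1 by (simp add: s_def)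
    have key: "z *\<^sub>C DQ y - Dm y = (z - 1) *\<^sub>C E s y" for y
    proof -
      have "z *\<^sub>C DQ y - Dm y = z *\<^sub>C (y + 1 *\<^sub>C Q y + \<i> *\<^sub>C T y) - (y + (-1) *\<^sub>C Q y + \<i> *\<^sub>C T y)"
        unfolding DQ_def Dm_def by (simp add: scaleC_minus_left)
      also have "\<dots> = (z - 1) *\<^sub>C y + (z + 1) *\<^sub>C Q y + ((z - 1) * \<i>) *\<^sub>C T y"
        by (simp only: lin_comb) (simp add: algebra_simps)
      also have "\<dots> = (z - 1) *\<^sub>C E s y"
        unfolding E_def by (simp add: scaleC_add_right scaleC_scaleC zs)
      finally show ?thesis .
    qed
    define c where "c = 1 / (z - 1)"
    have c1: "(z - 1) * c = 1" "c * (z - 1) = 1" using z1 by (auto simp: c_def)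
    define R where "R = (\<lambda>v. z *\<^sub>C v - C v)"
    define W where "W = DQ \<circ> H \<circ> (\<lambda>x. c *\<^sub>C x)"
    have Wcbl: "cbounded_linear W" unfolding W_def
      by (intro cbl_comp DQcbl Hcbl cbl_scale)
    have R_eq: "R x = (z - 1) *\<^sub>C E s (N x)" for x
    proof -
      have "R x = z *\<^sub>C DQ (N x) - Dm (N x)" unfolding R_def Ceq using DQN[of x] by simp
      then show ?thesis using key by simp
    qed
    have WR: "W (R x) = x" for x
      unfolding W_def using R_eq[of x] by (simp add: scaleC_scaleC c1 HE DQN)
    have RW: "R (W x) = x" for x
    proof -
      have "R (W x) = (z - 1) *\<^sub>C E s (N (DQ (H (c *\<^sub>C x))))" unfolding W_def using R_eq by simp
      also have "\<dots> = x" by (simp add: NDQ EH scaleC_scaleC c1)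
      finally show ?thesis .
    qed
    have Rinv: "op_invertible R" and Rinv_eq: "op_inv R = W"
      using op_invertibleI[OF Wcbl WR RW] by auto
    have "norm ((z - 1) *\<^sub>C W x) \<le> K * norm x" for x
    proof -
      have "(z - 1) *\<^sub>C W x = DQ (H x)"
        unfolding W_def using cbl_scaleC[OF DQcbl] cbl_scaleC[OF Hcbl]
        by (simp add: scaleC_scaleC c1)
      then have "norm ((z - 1) *\<^sub>C W x) \<le> norm (H x) * K" using K by simp
      also have "\<dots> \<le> norm x * K" using Hn K by (simp add: mult_right_mono)
      finally show ?thesis by (simp add: mult.commute)
    qed
    then have "onorm (\<lambda>x. (z - 1) *\<^sub>C W x) \<le> K" by (intro onorm_bound K(1))
    then show ?thesis using Rinv Rinv_eq unfolding R_def by simp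
  qed
  have "ritt C"
    unfolding ritt_def
  proof (intro conjI Ccbl exI allI impI subsetI)
    fix z assume "z \<in> op_spectrum C"
    then have "\<not> op_invertible (\<lambda>v. z *\<^sub>C v - C v)" by (simp add: op_spectrum_def)
    show "z \<in> ball 0 1 \<union> {1}"
    proof (rule ccontr)
      assume "z \<notin> ball 0 1 \<union> {1}"
      then have "z \<noteq> 1" "1 \<le> cmod z" by (auto simp: dist_norm)
      then show False using resolv[of z] \<open>\<not> op_invertible (\<lambda>v. z *\<^sub>C v - C v)\<close> by blast
    qed
  next
    fix z :: complex assume z1: "1 < cmod z"
    then have "z \<noteq> 1" by auto
    then show "onorm (\<lambda>x. (z - 1) *\<^sub>C op_inv (\<lambda>v. z *\<^sub>C v - C v) x) \<le> K"
      using resolv[of z] z1 by auto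
  qed
  then show ?thesis using Dinv Apinv Ceq unfolding D_def Ap_def Dm_def N_def DQ_def by simp
qed

end
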